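(* In the setting of the context, suppose $x_1,\dots,x_n$ are in general position, $d\ge K_*$ and $0<T\le e^{c_*d/2}$. For $x_0\in\mathbb{R}^d$ let $X_t(x_0)$ solve $\mathrm{d}X_t=\hat s(X_t)\,\mathrm{d}t+\sqrt2\,\mathrm{d}B_t$, $X_0=x_0$, and let $\tau(x_0)=\inf\{t\ge0:\|X_t(x_0)-x_0\|\ge0.15\sqrt d\}$. Then for every $1\le i\le n$, $\mathbb{P}(\tau(x_i)>T)\ge1-3\alpha e^{-c_*d}$.
   Context: $c_*>0$, $K_*>0$, $\alpha_*\ge1$ are universal constants such that: whenever $d\ge K_*$, $0<T\le e^{c_*d/2}$, $\alpha\ge\alpha_*$ and $B$ is a standard Brownian motion in $\mathbb{R}^d$, $\mathbb{P}(\sup_{t\in[0,T]}\|\int_0^t e^{-\alpha(t-s)}\mathrm{d}B_s\|>0.1\sqrt d)\le 3\alpha e^{-c_*d}$. Set $\alpha=\alpha_*$. Points $x_1,\dots,x_n\in\mathbb{R}^d$ are in general position if $\|x_i-x_j\|\ge0.4\sqrt d$ for all $i\ne j$ and $0.5\sqrt d\le\|x_i\|\le2\sqrt d$ for all $i$; then any $x$ with $\|x-x_i\|<0.2\sqrt d$ for some $i$ has that $i$ unique. $\rho:\mathbb{R}\to[0,1]$ is a fixed smooth function with $\rho(r)=1$ for $r\le4$, $\rho(r)=0$ for $r\ge5$, $|\rho'|\le H$ (universal). The score estimate is $\hat s(x)=-\alpha(x-x_i)$ if $\|x-x_i\|\le0.15\sqrt d$ for some $i$; $\hat s(x)=-x$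 if $\|x-x_i\|\ge0.16\sqrt d$ for all $i$; and otherwise, with $i$ the unique index with $0.15\sqrt d<\|x-x_i\|<0.16\sqrt d$ and $w=\rho(100\|x-x_i\|/\sqrt d-11)$, $\hat s(x)=-w\,\alpha(x-x_i)-(1-w)x$. $B$ is a standard $d$-dimensional Brownian motion. *)

theory Defs
  imports "HOL-Probability.Probability"
begin

text \<open>Standard Brownian motion in R^d (d = CARD('n)), on a probability space M.\<close>
definition std_BM :: "'a measure \<Rightarrow> (real \<Rightarrow> 'a \<Rightarrow> real ^ 'n) \<Rightarrow> bool" where
  "std_BM M B \<longleftrightarrow> prob_space M \<and>
     (\<forall>t\<ge>0. B t \<in> borel_measurable M) \<and>
     (\<forall>\<omega>\<in>space M. B 0 \<omega> = 0 \<and> continuous_on {0..} (\<lambda>t. B t \<omega>)) \<and>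
     (\<forall>s t. 0 \<le> s \<and> s < t \<longrightarrow>
        (\<forall>i. distributed M lborel (\<lambda>\<omega>. (B t \<omega> - B s \<omega>) $ i)
               (\<lambda>x. ennreal (normal_density 0 (sqrt (t - s)) x))) \<and>
        prob_space.indep_vars M (\<lambda>_. borel) (\<lambda>i \<omega>. (B t \<omega> - B s \<omega>) $ i) UNIV) \<and>
     (\<forall>ts. sorted ts \<and> (\<forall>t\<in>set ts. 0 \<le> t) \<longrightarrow>
        prob_space.indep_vars M (\<lambda>_. borel)
          (\<lambda>j \<omega>. B (ts ! Suc j) \<omega> - B (ts ! j) \<omega>) {..<length ts - 1})"

text \<open>The Wiener integral int_0^t exp(-alpha(t-s)) dB_s, written pathwise via
  integration by parts: B_t - alpha * int_0^t exp(-alpha(t-s)) B_s ds.\<close>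
definition ou_integral :: "real \<Rightarrow> (real \<Rightarrow> 'a \<Rightarrow> real ^ 'n) \<Rightarrow> real \<Rightarrow> 'a \<Rightarrow> real ^ 'n" where
  "ou_integral \<alpha> B t \<omega> =
     B t \<omega> - \<alpha> *\<^sub>R integral {0..t} (\<lambda>s. exp (-\<alpha> * (t - s)) *\<^sub>R B s \<omega>)"

definition general_position :: "nat \<Rightarrow> (nat \<Rightarrow> real ^ 'n) \<Rightarrow> bool" where
  "general_position n x \<longleftrightarrow>
     (\<forall>i\<in>{1..n}. \<forall>j\<in>{1..n}. i \<noteq> j \<longrightarrow> dist (x i) (x j) \<ge> 0.4 * sqrt (real CARD('n))) \<and>
     (\<forall>i\<in>{1..n}. 0.5 * sqrt (real CARD('n)) \<le> norm (x i) \<and> norm (x i) \<le> 2 * sqrt (real CARD('n)))"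

definition score_est :: "real \<Rightarrow> (real \<Rightarrow> real) \<Rightarrow> nat \<Rightarrow> (nat \<Rightarrow> real ^ 'n) \<Rightarrow> real ^ 'n \<Rightarrow> real ^ 'n" where
  "score_est \<alpha> \<rho> n x y =
     (let sd = sqrt (real CARD('n)) in
      if \<exists>i\<in>{1..n}. norm (y - x i) \<le> 0.15 * sd then
        (let i = (SOME i. i \<in> {1..n} \<and> norm (y - x i) \<le> 0.15 * sd) in - (\<alpha> *\<^sub>R (y - x i)))
      else if \<forall>i\<in>{1..n}. norm (y - x i) \<ge> 0.16 * sd then - y
      else
        (let i = (SOME i. i \<in> {1..n} \<and> 0.15 * sd < norm (y - x i) \<and> norm (y - x i) < 0.16 * sd);
             w = \<rho> (100 * norm (y - x i) / sd - 11)
         in - ((w * \<alpha>) *\<^sub>R (y - x i)) - (1 - w) *\<^sub>R y))"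

text \<open>Exit time tau(x0) = inf {t >= 0 : |X_t - x0| >= 0.15 sqrt d}, as an extended real
  (inf of the empty set is +infinity).\<close>
definition exit_time :: "(real \<Rightarrow> 'a \<Rightarrow> real ^ 'n) \<Rightarrow> real ^ 'n \<Rightarrow> 'a \<Rightarrow> ereal" where
  "exit_time X x0 \<omega> =
     Inf {ereal t | t. 0 \<le> t \<and> norm (X t \<omega> - x0) \<ge> 0.15 * sqrt (real CARD('n))}"

end

theory Submission
  imports Defs
begin


lemma ode_unique:
  fixes Y b :: "real \<Rightarrow> 'b::banach"
  assumes t1: "0 \<le> t1" and cY: "continuous_on {0..t1} Y" and cb: "continuous_on {0..t1} b"
    and eq: "\<And>t. t \<in> {0..t1} \<Longrightarrow> Y t = b t - \<alpha> *\<^sub>R integral {0..t} Y"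
  shows "Y t1 = b t1 - \<alpha> *\<^sub>R integral {0..t1} (\<lambda>s. exp (-\<alpha> * (t1 - s)) *\<^sub>R b s)"
proof -
  define I where "I u = integral {0..u} Y" for u
  define J where "J u = exp (\<alpha> * u) *\<^sub>R I u" for u
  have dI: "(I has_vector_derivative Y u) (at u within {0..t1})" if "u \<in> {0..t1}" for u
    unfolding I_def by (rule integral_has_vector_derivative[OF cY that])
  have dJ: "(J has_vector_derivative (exp (\<alpha> * u) *\<^sub>R b u)) (at u within {0..t1})"
    if u: "u \<in> {0..t1}" for u
  proof -
    have e: "((\<lambda>u. exp (\<alpha> * u)) has_field_derivative (exp (\<alpha> * u) * \<alpha>)) (at u within {0..t1})"
      by (auto intro!: derivative_eq_intros)
    have "(J has_vector_derivative (exp (\<alpha> * u) *\<^sub>R Y u + (exp (\<alpha> * u) * \<alpha>) *\<^sub>R I u)) (at u within {0..t1})"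
      unfolding J_def by (rule has_vector_derivative_scaleR[OF e dI[OF u]])
    moreover have "exp (\<alpha> * u) *\<^sub>R Y u + (exp (\<alpha> * u) * \<alpha>) *\<^sub>R I u = exp (\<alpha> * u) *\<^sub>R b u"
    proof -
      have "b u = Y u + \<alpha> *\<^sub>R I u" using eq[OF u] unfolding I_def by (simp add: algebra_simps)
      then show ?thesis by (simp add: scaleR_add_right)
    qed
    ultimately show ?thesis by simp
  qed
  have "((\<lambda>u. exp (\<alpha> * u) *\<^sub>R b u) has_integral (J t1 - J 0)) {0..t1}"
    by (rule fundamental_theorem_of_calculus[OF t1 dJ])
  then have int1: "integral {0..t1} (\<lambda>u. exp (\<alpha> * u) *\<^sub>R b u) = J t1"
    by (simp add: J_def I_def integral_unique)
  have "integral {0..t1} (\<lambda>s. exp (-\<alpha> * (t1 - s)) *\<^sub>R b s)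
      = integral {0..t1} (\<lambda>s. exp (-\<alpha> * t1) *\<^sub>R (exp (\<alpha> * s) *\<^sub>R b s))"
    by (rule integral_cong) (simp add: algebra_simps flip: exp_add)
  also have "\<dots> = exp (-\<alpha> * t1) *\<^sub>R J t1" using int1 by (simp only: integral_cmul)
  also have "\<dots> = I t1" by (simp add: J_def flip: exp_add)
  finally show ?thesis using eq[of t1] t1 by (simp add: I_def)
qed




lemma floor_approx_tendsto:
  "(\<lambda>i. real_of_int \<lfloor>real (Suc i) * s\<rfloor> / real (Suc i)) \<longlonglongrightarrow> (s::real)"
proof (rule tendsto_sandwich[where f="\<lambda>i. s - inverse (real (Suc i))" and h="\<lambda>i. s"])
  show "\<forall>\<^sub>F i in sequentially. s - inverse (real (Suc i)) \<le> real_of_int \<lfloor>real (Suc i) * s\<rfloor> / real (Suc i)"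
  proof (rule always_eventually, rule allI)
    fix i
    have p: "real (Suc i) > 0" by simp
    have "real (Suc i) * s - 1 \<le> real_of_int \<lfloor>real (Suc i) * s\<rfloor>" by linarith
    then have "(real (Suc i) * s - 1) / real (Suc i) \<le> real_of_int \<lfloor>real (Suc i) * s\<rfloor> / real (Suc i)"
      using p by (intro divide_right_mono) auto
    moreover have "(real (Suc i) * s - 1) / real (Suc i) = s - inverse (real (Suc i))"
      using p by (simp add: field_simps)
    ultimately show "s - inverse (real (Suc i)) \<le> real_of_int \<lfloor>real (Suc i) * s\<rfloor> / real (Suc i)"
      by simp
  qed
  show "\<forall>\<^sub>F i in sequentially. real_of_int \<lfloor>real (Suc i) * s\<rfloor> / real (Suc i) \<le> s"
  proof (rule always_eventually, rule allI)
    fix i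
    have p: "real (Suc i) > 0" by simp
    have "real_of_int \<lfloor>real (Suc i) * s\<rfloor> \<le> real (Suc i) * s" by linarith
    then show "real_of_int \<lfloor>real (Suc i) * s\<rfloor> / real (Suc i) \<le> s"
      using p by (simp add: field_simps)
  qed
  show "(\<lambda>i. s - inverse (real (Suc i))) \<longlonglongrightarrow> s"
    using tendsto_diff[OF tendsto_const LIMSEQ_inverse_real_of_nat, of s] by simp
qed simp

lemma joint_meas:
  fixes B :: "real \<Rightarrow> 'a \<Rightarrow> 'b::metric_space"
  assumes meas: "\<And>t. t \<ge> 0 \<Longrightarrow> B t \<in> borel_measurable M"
    and cont: "\<And>\<omega>. \<omega> \<in> space M \<Longrightarrow> continuous_on {0..} (\<lambda>t. B t \<omega>)"
  shows "(\<lambda>p::'a \<times> real. B (max 0 (snd p)) (fst p)) \<in> borel_measurable (M \<Otimes>\<^sub>M lborel)"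
proof (rule borel_measurable_LIMSEQ_metric[where f="\<lambda>i (p::'a \<times> real). B (max 0 (real_of_int \<lfloor>real (Suc i) * snd p\<rfloor> / real (Suc i))) (fst p)"])
  fix i
  show "(\<lambda>p::'a \<times> real. B (max 0 (real_of_int \<lfloor>real (Suc i) * snd p\<rfloor> / real (Suc i))) (fst p)) \<in> borel_measurable (M \<Otimes>\<^sub>M lborel)"
  proof (rule measurable_compose_countable[where f="\<lambda>k (p::'a \<times> real). B (max 0 (real_of_int k / real (Suc i))) (fst p)" and g="\<lambda>p::'a \<times> real. \<lfloor>real (Suc i) * snd p\<rfloor>"])
    fix k :: int
    show "(\<lambda>p::'a \<times> real. B (max 0 (real_of_int k / real (Suc i))) (fst p)) \<in> borel_measurable (M \<Otimes>\<^sub>M lborel)"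
      by (rule measurable_compose[OF measurable_fst meas]) simp
  next
    have "(\<lambda>p::'a \<times> real. real (Suc i) * snd p) \<in> borel_measurable (M \<Otimes>\<^sub>M lborel)" by measurable
    then show "(\<lambda>p::'a \<times> real. \<lfloor>real (Suc i) * snd p\<rfloor>) \<in> measurable (M \<Otimes>\<^sub>M lborel) (count_space UNIV)"
      by (rule measurable_compose[OF _ measurable_real_floor])
  qed
next
  fix p :: "'a \<times> real" assume "p \<in> space (M \<Otimes>\<^sub>M lborel)"
  then have w: "fst p \<in> space M" by (auto simp: space_pair_measure)
  have "(\<lambda>i. max 0 (real_of_int \<lfloor>real (Suc i) * snd p\<rfloor> / real (Suc i))) \<longlonglongrightarrow> max 0 (snd p)"
    by (intro tendsto_max tendsto_const floor_approx_tendsto)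
  then show "(\<lambda>i. B (max 0 (real_of_int \<lfloor>real (Suc i) * snd p\<rfloor> / real (Suc i))) (fst p)) \<longlonglongrightarrow> B (max 0 (snd p)) (fst p)"
    by (rule continuous_on_tendsto_compose[OF cont[OF w]]) auto
qed

lemma int_meas:
  fixes B :: "real \<Rightarrow> 'a \<Rightarrow> 'b::euclidean_space"
  assumes meas: "\<And>t. t \<ge> 0 \<Longrightarrow> B t \<in> borel_measurable M"
    and cont: "\<And>\<omega>. \<omega> \<in> space M \<Longrightarrow> continuous_on {0..} (\<lambda>t. B t \<omega>)"
  shows "(\<lambda>\<omega>. integral {0..t} (\<lambda>s. exp (-\<alpha> * (t - s)) *\<^sub>R B s \<omega>)) \<in> borel_measurable M"
proof -
  have jm[measurable]: "(\<lambda>p. B (max 0 (snd p)) (fst p)) \<in> borel_measurable (M \<Otimes>\<^sub>M lborel)"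
    by (rule joint_meas[OF meas cont])
  define F where "F \<omega> = (\<integral>s. indicator {0..t} s *\<^sub>R (exp (-\<alpha> * (t - s)) *\<^sub>R B (max 0 s) \<omega>) \<partial>lborel)" for \<omega>
  have "(\<lambda>p. indicator {0..t} (snd p) *\<^sub>R (exp (-\<alpha> * (t - snd p)) *\<^sub>R B (max 0 (snd p)) (fst p)))
      \<in> borel_measurable (M \<Otimes>\<^sub>M lborel)" by measurable
  then have "F \<in> borel_measurable M" unfolding F_def
    by (intro lborel.borel_measurable_lebesgue_integral) (simp add: case_prod_beta')
  moreover have "F \<omega> = integral {0..t} (\<lambda>s. exp (-\<alpha> * (t - s)) *\<^sub>R B s \<omega>)" if w: "\<omega> \<in> space M" for \<omega>
  proof -
    have c: "continuous_on {0..t} (\<lambda>s. exp (-\<alpha> * (t - s)) *\<^sub>R B (max 0 s) \<omega>)"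
    proof -
      have "continuous_on {0..t} (\<lambda>s. B s \<omega>)"
        by (rule continuous_on_subset[OF cont[OF w]]) auto
      then have "continuous_on {0..t} (\<lambda>s. B (max 0 s) \<omega>)"
        by (rule continuous_on_eq) auto
      then show ?thesis by (intro continuous_intros)
    qed
    have si: "set_integrable lborel {0..t} (\<lambda>s. exp (-\<alpha> * (t - s)) *\<^sub>R B (max 0 s) \<omega>)"
      unfolding set_integrable_def by (rule borel_integrable_compact[OF compact_Icc c])
    have "F \<omega> = integral {0..t} (\<lambda>s. exp (-\<alpha> * (t - s)) *\<^sub>R B (max 0 s) \<omega>)"
      using set_borel_integral_eq_integral(2)[OF si] unfolding F_def set_lebesgue_integral_def by simp
    also have "\<dots> = integral {0..t} (\<lambda>s. exp (-\<alpha> * (t - s)) *\<^sub>R B s \<omega>)"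
      by (rule integral_cong) auto
    finally show ?thesis .
  qed
  ultimately show ?thesis by (rule measurable_cong[THEN iffD1, rotated])
qed




lemma ou_alt:
  "ou_integral \<alpha> B t \<omega> = B t \<omega> - \<alpha> *\<^sub>R (exp (-\<alpha> * t) *\<^sub>R integral {0..t} (\<lambda>s. exp (\<alpha> * s) *\<^sub>R B s \<omega>))"
proof -
  have "integral {0..t} (\<lambda>s. exp (-\<alpha> * (t - s)) *\<^sub>R B s \<omega>)
      = integral {0..t} (\<lambda>s. exp (-\<alpha> * t) *\<^sub>R (exp (\<alpha> * s) *\<^sub>R B s \<omega>))"
    by (rule integral_cong) (simp add: algebra_simps flip: exp_add)
  also have "\<dots> = exp (-\<alpha> * t) *\<^sub>R integral {0..t} (\<lambda>s. exp (\<alpha> * s) *\<^sub>R B s \<omega>)"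
    by (simp only: integral_cmul)
  finally show ?thesis unfolding ou_integral_def by simp
qed

lemma ou_cont:
  fixes B :: "real \<Rightarrow> 'a \<Rightarrow> real ^ 'n"
  assumes cont: "continuous_on {0..} (\<lambda>t. B t \<omega>)"
  shows "continuous_on {0..T} (\<lambda>t. ou_integral \<alpha> B t \<omega>)"
proof -
  have cB: "continuous_on {0..T} (\<lambda>t. B t \<omega>)"
    by (rule continuous_on_subset[OF cont]) auto
  have "continuous_on {0..T} (\<lambda>s. exp (\<alpha> * s) *\<^sub>R B s \<omega>)"
    using cB by (intro continuous_intros)
  then have "continuous_on {0..T} (\<lambda>t. integral {0..t} (\<lambda>s. exp (\<alpha> * s) *\<^sub>R B s \<omega>))"
    by (intro indefinite_integral_continuous_1 integrable_continuous_interval)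
  then have "continuous_on {0..T} (\<lambda>t. B t \<omega> - \<alpha> *\<^sub>R (exp (-\<alpha> * t) *\<^sub>R integral {0..t} (\<lambda>s. exp (\<alpha> * s) *\<^sub>R B s \<omega>)))"
    using cB by (intro continuous_intros)
  then show ?thesis by (simp add: ou_alt)
qed

lemma ou_meas:
  fixes B :: "real \<Rightarrow> 'a \<Rightarrow> real ^ 'n"
  assumes meas: "\<And>t. t \<ge> 0 \<Longrightarrow> B t \<in> borel_measurable M"
    and cont: "\<And>\<omega>. \<omega> \<in> space M \<Longrightarrow> continuous_on {0..} (\<lambda>t. B t \<omega>)"
    and t: "t \<ge> 0"
  shows "(\<lambda>\<omega>. ou_integral \<alpha> B t \<omega>) \<in> borel_measurable M"
proof -
  have [measurable]: "(\<lambda>\<omega>. integral {0..t} (\<lambda>s. exp (-\<alpha> * (t - s)) *\<^sub>R B s \<omega>)) \<in> borel_measurable M"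
    by (rule int_meas[OF meas cont])
  have [measurable]: "B t \<in> borel_measurable M" using meas t .
  show ?thesis unfolding ou_integral_def by measurable
qed



lemma exists_reduce:
  fixes f :: "real \<Rightarrow> real"
  assumes c: "continuous_on {0..T} f" and T: "T \<ge> 0"
  shows "(\<exists>t\<in>{0..T}. f t > r) \<longleftrightarrow> (\<exists>q\<in>insert T (\<rat> \<inter> {0..T}). f q > r)"
proof
  assume "\<exists>t\<in>{0..T}. f t > r"
  then obtain t where t: "t \<in> {0..T}" "f t > r" by blast
  show "\<exists>q\<in>insert T (\<rat> \<inter> {0..T}). f q > r"
  proof (cases "t = T")
    case True then show ?thesis using t by auto
  next
    case False
    then have tT: "t < T" using t by auto
    have "f t - r > 0" using t by simp
    then obtain d where d: "d > 0" "\<And>y. y \<in> {0..T} \<Longrightarrow> dist y t < d \<Longrightarrow> dist (f y) (f t) < f t - r"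
      using c t unfolding continuous_on_iff by blast
    have tm: "t < min (t + d) T" using d tT by auto
    obtain q where q: "q \<in> \<rat>" "t < q" "q < min (t + d) T" using Rats_dense_in_real[OF tm] by blast
    then have qi: "q \<in> {0..T}" using t by auto
    have "dist q t < d" using q by (auto simp: dist_real_def)
    then have "dist (f q) (f t) < f t - r" using d qi by blast
    then have "f q > r" by (auto simp: dist_real_def)
    then show ?thesis using q qi by auto
  qed
next
  assume "\<exists>q\<in>insert T (\<rat> \<inter> {0..T}). f q > r"
  then show "\<exists>t\<in>{0..T}. f t > r" using T by auto
qed

lemma sets_exists:
  fixes g :: "real \<Rightarrow> 'a \<Rightarrow> real"
  assumes meas: "\<And>q. q \<in> {0..T} \<Longrightarrow> g q \<in> borel_measurable M"
    and cont: "\<And>\<omega>. \<omega> \<in> space M \<Longrightarrow> continuous_on {0..T} (\<lambda>t. g t \<omega>)"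
    and T: "T \<ge> 0"
  shows "{\<omega> \<in> space M. \<exists>t\<in>{0..T}. g t \<omega> > r} \<in> sets M"
proof -
  have "{\<omega> \<in> space M. \<exists>t\<in>{0..T}. g t \<omega> > r}
      = (\<Union>q\<in>insert T (\<rat> \<inter> {0..T}). {\<omega> \<in> space M. g q \<omega> > r})"
  proof (rule set_eqI, rule iffI)
    fix \<omega> assume a: "\<omega> \<in> {\<omega> \<in> space M. \<exists>t\<in>{0..T}. g t \<omega> > r}"
    then have w: "\<omega> \<in> space M" by blast
    from a have "\<exists>t\<in>{0..T}. g t \<omega> > r" by blast
    then obtain q where "q \<in> insert T (\<rat> \<inter> {0..T})" "g q \<omega> > r"
      using exists_reduce[OF cont[OF w] T, of r] by blast
    then show "\<omega> \<in> (\<Union>q\<in>insert T (\<rat> \<inter> {0..T}). {\<omega> \<in> space M. g q \<omega> > r})"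
      using w by blast
  next
    fix \<omega> assume "\<omega> \<in> (\<Union>q\<in>insert T (\<rat> \<inter> {0..T}). {\<omega> \<in> space M. g q \<omega> > r})"
    then show "\<omega> \<in> {\<omega> \<in> space M. \<exists>t\<in>{0..T}. g t \<omega> > r}"
      using T by auto
  qed
  also have "\<dots> \<in> sets M"
  proof (rule sets.countable_UN'')
    show "countable (insert T (\<rat> \<inter> {0..T}))" using countable_rat by auto
  next
    fix q assume "q \<in> insert T (\<rat> \<inter> {0..T})"
    then have [measurable]: "g q \<in> borel_measurable M" using meas T by auto
    show "{\<omega> \<in> space M. g q \<omega> > r} \<in> sets M" by measurable
  qed
  finally show ?thesis .
qed

lemma forall_reduce:
  fixes f :: "real \<Rightarrow> real"
  assumes c: "continuous_on {0..T} f" and T: "T \<ge> 0"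
  shows "(\<forall>t\<in>{0..T}. f t < R) \<longleftrightarrow> (\<exists>m::nat. \<not> (\<exists>t\<in>{0..T}. f t > R - inverse (real (Suc m))))"
proof
  assume a: "\<forall>t\<in>{0..T}. f t < R"
  have ne: "{0..T} \<noteq> {}" using T by simp
  obtain x where x: "x \<in> {0..T}" "\<And>y. y \<in> {0..T} \<Longrightarrow> f y \<le> f x"
    using continuous_attains_sup[OF compact_Icc ne c] by blast
  have "0 < R - f x" using a x(1) by simp
  then obtain m where mm: "inverse (real (Suc m)) < R - f x" using reals_Archimedean by blast
  show "\<exists>m::nat. \<not> (\<exists>t\<in>{0..T}. f t > R - inverse (real (Suc m)))"
  proof (intro exI[of _ m] notI)
    assume "\<exists>t\<in>{0..T}. f t > R - inverse (real (Suc m))"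
    then obtain t where "t \<in> {0..T}" "f t > R - inverse (real (Suc m))" by blast
    with x(2)[of t] mm show False by linarith
  qed
next
  assume "\<exists>m::nat. \<not> (\<exists>t\<in>{0..T}. f t > R - inverse (real (Suc m)))"
  then obtain m where m: "\<And>t. t\<in>{0..T} \<Longrightarrow> \<not> f t > R - inverse (real (Suc m))" by blast
  have p: "inverse (real (Suc m)) > 0" by simp
  show "\<forall>t\<in>{0..T}. f t < R"
  proof
    fix t assume "t \<in> {0..T}"
    from m[OF this] p show "f t < R" by linarith
  qed
qed
lemma sets_forall:
  fixes g :: "real \<Rightarrow> 'a \<Rightarrow> real"
  assumes meas: "\<And>q. q \<in> {0..T} \<Longrightarrow> g q \<in> borel_measurable M"
    and cont: "\<And>\<omega>. \<omega> \<in> space M \<Longrightarrow> continuous_on {0..T} (\<lambda>t. g t \<omega>)"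
    and T: "T \<ge> 0"
  shows "{\<omega> \<in> space M. \<forall>t\<in>{0..T}. g t \<omega> < R} \<in> sets M"
proof -
  have "{\<omega> \<in> space M. \<forall>t\<in>{0..T}. g t \<omega> < R}
      = (\<Union>m::nat. space M - {\<omega> \<in> space M. \<exists>t\<in>{0..T}. g t \<omega> > R - inverse (real (Suc m))})"
  proof (rule set_eqI, rule iffI)
    fix \<omega> assume a: "\<omega> \<in> {\<omega> \<in> space M. \<forall>t\<in>{0..T}. g t \<omega> < R}"
    then have w: "\<omega> \<in> space M" by blast
    from a have "\<forall>t\<in>{0..T}. g t \<omega> < R" by blast
    then obtain m where "\<not> (\<exists>t\<in>{0..T}. g t \<omega> > R - inverse (real (Suc m)))"
      using forall_reduce[OF cont[OF w] T, of R] by blast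
    then show "\<omega> \<in> (\<Union>m::nat. space M - {\<omega> \<in> space M. \<exists>t\<in>{0..T}. g t \<omega> > R - inverse (real (Suc m))})"
      using w by blast
  next
    fix \<omega> assume a: "\<omega> \<in> (\<Union>m::nat. space M - {\<omega> \<in> space M. \<exists>t\<in>{0..T}. g t \<omega> > R - inverse (real (Suc m))})"
    then have w: "\<omega> \<in> space M" by auto
    from a obtain m where "\<not> (\<exists>t\<in>{0..T}. g t \<omega> > R - inverse (real (Suc m)))" by auto
    then have "\<forall>t\<in>{0..T}. g t \<omega> < R"
      using forall_reduce[OF cont[OF w] T, of R] by blast
    then show "\<omega> \<in> {\<omega> \<in> space M. \<forall>t\<in>{0..T}. g t \<omega> < R}" using w by auto
  qed
  also have "\<dots> \<in> sets M"
  proof (rule sets.countable_UN'')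
    fix m :: nat
    show "space M - {\<omega> \<in> space M. \<exists>t\<in>{0..T}. g t \<omega> > R - inverse (real (Suc m))} \<in> sets M"
      by (rule sets.compl_sets[OF sets_exists[OF meas cont T]])
  qed simp
  finally show ?thesis .
qed




theorem mainTheorem6:
  fixes c K \<alpha>0 H T :: real
    and \<rho> :: "real \<Rightarrow> real"
    and M :: "'a measure"
    and B X :: "real \<Rightarrow> 'a \<Rightarrow> real ^ 'n"
    and x :: "nat \<Rightarrow> real ^ 'n"
    and n i :: nat
  assumes c_pos: "c > 0" and K_pos: "K > 0" and alpha0: "\<alpha>0 \<ge> 1"
    and OU_bound: "\<forall>(M' :: 'a measure) (B' :: real \<Rightarrow> 'a \<Rightarrow> real ^ 'n) T' \<alpha>.
        std_BM M' B' \<and> real CARD('n) \<ge> K \<and> 0 < T' \<and> T' \<le> exp (c * real CARD('n) / 2) \<and> \<alpha> \<ge> \<alpha>0 \<longrightarrow>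
        measure M' {\<omega> \<in> space M'. \<exists>t\<in>{0..T'}. norm (ou_integral \<alpha> B' t \<omega>) > 0.1 * sqrt (real CARD('n))}
          \<le> 3 * \<alpha> * exp (- c * real CARD('n))"
    and rho_range: "\<forall>r. 0 \<le> \<rho> r \<and> \<rho> r \<le> 1"
    and rho_one: "\<forall>r\<le>4. \<rho> r = 1"
    and rho_zero: "\<forall>r\<ge>5. \<rho> r = 0"
    and rho_smooth: "\<forall>k r. ((deriv ^^ k) \<rho>) differentiable (at r)"
    and rho_deriv: "\<forall>r. \<bar>deriv \<rho> r\<bar> \<le> H"
    and BM: "std_BM M B"
    and gp: "general_position n x"
    and d_large: "real CARD('n) \<ge> K"
    and T_pos: "0 < T" and T_le: "T \<le> exp (c * real CARD('n) / 2)"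
    and i_range: "i \<in> {1..n}"
    and X_cont: "\<forall>\<omega>\<in>space M. continuous_on {0..} (\<lambda>t. X t \<omega>)"
    and X_sde: "\<forall>\<omega>\<in>space M. \<forall>t\<ge>0.
        X t \<omega> = x i + integral {0..t} (\<lambda>s. score_est \<alpha>0 \<rho> n x (X s \<omega>)) + sqrt 2 *\<^sub>R B t \<omega>"
  shows "measure M {\<omega> \<in> space M. exit_time X (x i) \<omega> > ereal T}
           \<ge> 1 - 3 * \<alpha>0 * exp (- c * real CARD('n))"
proof -
  let ?sd = "sqrt (real CARD('n))"
  let ?R = "0.15 * ?sd"
  have sd1: "?sd \<ge> 1" by simp
  have BMu: "prob_space M" "\<And>t. t \<ge> 0 \<Longrightarrow> B t \<in> borel_measurable M"
    "\<And>\<omega>. \<omega> \<in> space M \<Longrightarrow> B 0 \<omega> = 0 \<and> continuous_on {0..} (\<lambda>t. B t \<omega>)"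
  proof -
    have u: "prob_space M \<and> (\<forall>t\<ge>0. B t \<in> borel_measurable M) \<and>
     (\<forall>\<omega>\<in>space M. B 0 \<omega> = 0 \<and> continuous_on {0..} (\<lambda>t. B t \<omega>))"
      using BM unfolding std_BM_def by (elim conjE) (intro conjI)
    then show "prob_space M" by blast
    from u show "\<And>t. t \<ge> 0 \<Longrightarrow> B t \<in> borel_measurable M" by blast
    from u show "\<And>\<omega>. \<omega> \<in> space M \<Longrightarrow> B 0 \<omega> = 0 \<and> continuous_on {0..} (\<lambda>t. B t \<omega>)" by blast
  qed
  have Bc: "\<And>\<omega>. \<omega> \<in> space M \<Longrightarrow> continuous_on {0..} (\<lambda>t. B t \<omega>)" using BMu(3) by blast
  have score: "score_est \<alpha>0 \<rho> n x y = -(\<alpha>0 *\<^sub>R (y - x i))" if h: "norm (y - x i) \<le> ?R" for y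
  proof -
    have ex: "\<exists>j\<in>{1..n}. norm (y - x j) \<le> ?R" using i_range h by blast
    have some: "(SOME j. j \<in> {1..n} \<and> norm (y - x j) \<le> ?R) = i"
    proof (rule some_equality)
      show "i \<in> {1..n} \<and> norm (y - x i) \<le> ?R" using i_range h by blast
    next
      fix j assume j: "j \<in> {1..n} \<and> norm (y - x j) \<le> ?R"
      show "j = i"
      proof (rule ccontr)
        assume "j \<noteq> i"
        have gp1: "\<forall>i\<in>{1..n}. \<forall>j\<in>{1..n}. i \<noteq> j \<longrightarrow> dist (x i) (x j) \<ge> 0.4 * ?sd"
          using gp unfolding general_position_def by (rule conjunct1)
        have jn: "j \<in> {1..n}" using j by (rule conjunct1)
        have d1: "dist (x i) (x j) \<ge> 0.4 * ?sd" using gp1[rule_format, OF i_range jn not_sym[OF \<open>j \<noteq> i\<close>]] .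
        have "dist (x i) (x j) = norm ((y - x j) - (y - x i))" by (simp add: dist_norm)
        also have "\<dots> \<le> norm (y - x j) + norm (y - x i)" by (rule norm_triangle_ineq4)
        moreover have "norm (y - x j) \<le> 0.15 * sqrt (real CARD('n))" using j by (rule conjunct2)
      ultimately show False using d1 h sd1 by (simp add: power2_eq_square)
      qed
    qed
    have "score_est \<alpha>0 \<rho> n x y = -(\<alpha>0 *\<^sub>R (y - x (SOME j. j \<in> {1..n} \<and> norm (y - x j) \<le> ?R)))"
      unfolding score_est_def Let_def by (subst if_P[OF ex]) (rule refl)
    then show ?thesis unfolding some .
  qed
  have path: "X t1 \<omega> - x i = sqrt 2 *\<^sub>R ou_integral \<alpha>0 B t1 \<omega>"
    if w: "\<omega> \<in> space M" and t1: "0 \<le> t1" and h: "\<forall>s\<in>{0..t1}. s \<noteq> t1 \<longrightarrow> norm (X s \<omega> - x i) \<le> ?R"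
    for \<omega> t1
  proof -
    define Y where "Y t = X t \<omega> - x i" for t
    define b where "b t = sqrt 2 *\<^sub>R B t \<omega>" for t
    have cY: "continuous_on {0..t1} Y" unfolding Y_def
      by (intro continuous_intros continuous_on_subset[OF X_cont[rule_format, OF w]]) auto
    have cb: "continuous_on {0..t1} b" unfolding b_def
      by (intro continuous_intros continuous_on_subset[OF Bc[OF w]]) auto
    have eq: "Y t = b t - \<alpha>0 *\<^sub>R integral {0..t} Y" if t: "t \<in> {0..t1}" for t
    proof -
      have "integral {0..t} (\<lambda>s. score_est \<alpha>0 \<rho> n x (X s \<omega>)) = integral {0..t} (\<lambda>s. -(\<alpha>0 *\<^sub>R Y s))"
      proof (rule integral_spike[of "{t1}"])
        show "negligible {t1}" by blast
      next
        fix s assume s: "s \<in> {0..t} - {t1}"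
        then have "norm (X s \<omega> - x i) \<le> ?R" using h t by auto
        then show "-(\<alpha>0 *\<^sub>R Y s) = score_est \<alpha>0 \<rho> n x (X s \<omega>)" using score unfolding Y_def by simp
      qed
      also have "\<dots> = -(\<alpha>0 *\<^sub>R integral {0..t} Y)" by simp
      finally have "integral {0..t} (\<lambda>s. score_est \<alpha>0 \<rho> n x (X s \<omega>)) = -(\<alpha>0 *\<^sub>R integral {0..t} Y)" .
      moreover have "X t \<omega> = x i + integral {0..t} (\<lambda>s. score_est \<alpha>0 \<rho> n x (X s \<omega>)) + sqrt 2 *\<^sub>R B t \<omega>"
        using X_sde w t by auto
      ultimately show ?thesis unfolding Y_def b_def by (simp add: algebra_simps)
    qed
    have "Y t1 = b t1 - \<alpha>0 *\<^sub>R integral {0..t1} (\<lambda>s. exp (-\<alpha>0 * (t1 - s)) *\<^sub>R b s)"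
      by (rule ode_unique[OF t1 cY cb eq])
    also have "integral {0..t1} (\<lambda>s. exp (-\<alpha>0 * (t1 - s)) *\<^sub>R b s)
        = sqrt 2 *\<^sub>R integral {0..t1} (\<lambda>s. exp (-\<alpha>0 * (t1 - s)) *\<^sub>R B s \<omega>)"
    proof -
      have "integral {0..t1} (\<lambda>s. exp (-\<alpha>0 * (t1 - s)) *\<^sub>R b s)
          = integral {0..t1} (\<lambda>s. sqrt 2 *\<^sub>R (exp (-\<alpha>0 * (t1 - s)) *\<^sub>R B s \<omega>))"
        unfolding b_def by (rule integral_cong) simp
      then show ?thesis by (simp only: integral_cmul)
    qed
    finally show ?thesis unfolding Y_def b_def ou_integral_def by (simp add: algebra_simps)
  qed
  have iff: "exit_time X (x i) \<omega> > ereal T \<longleftrightarrow> (\<forall>t\<in>{0..T}. norm (sqrt 2 *\<^sub>R ou_integral \<alpha>0 B t \<omega>) < ?R)"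
    if w: "\<omega> \<in> space M" for \<omega>
  proof
    assume gt: "exit_time X (x i) \<omega> > ereal T"
    have lt: "norm (X t \<omega> - x i) < ?R" if t: "t \<in> {0..T}" for t
    proof (rule ccontr)
      assume "\<not> norm (X t \<omega> - x i) < ?R"
      then have "ereal t \<in> {ereal t | t. 0 \<le> t \<and> norm (X t \<omega> - x i) \<ge> ?R}" using t by auto
      then have "exit_time X (x i) \<omega> \<le> ereal t" unfolding exit_time_def by (rule Inf_lower)
      then have "ereal T < ereal t" by (rule order.strict_trans2[OF gt])
      then show False using t by simp
    qed
    show "\<forall>t\<in>{0..T}. norm (sqrt 2 *\<^sub>R ou_integral \<alpha>0 B t \<omega>) < ?R"
    proof
      fix t assume t: "t \<in> {0..T}"
      have "X t \<omega> - x i = sqrt 2 *\<^sub>R ou_integral \<alpha>0 B t \<omega>"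
      proof (rule path[OF w])
        show "0 \<le> t" using t by simp
        show "\<forall>s\<in>{0..t}. s \<noteq> t \<longrightarrow> norm (X s \<omega> - x i) \<le> ?R"
        proof (intro ballI impI)
          fix s assume "s \<in> {0..t}"
          then have "s \<in> {0..T}" using t by auto
          then show "norm (X s \<omega> - x i) \<le> ?R" by (rule less_imp_le[OF lt])
        qed
      qed
      then show "norm (sqrt 2 *\<^sub>R ou_integral \<alpha>0 B t \<omega>) < ?R" using lt[OF t] by simp
    qed
  next
    assume G: "\<forall>t\<in>{0..T}. norm (sqrt 2 *\<^sub>R ou_integral \<alpha>0 B t \<omega>) < ?R"
    have cX: "continuous_on {0..} (\<lambda>t. X t \<omega>)" using X_cont w by blast
    have all: "norm (X t \<omega> - x i) < ?R" if t: "t \<in> {0..T}" for t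
    proof (rule ccontr)
      assume nt: "\<not> norm (X t \<omega> - x i) < ?R"
      define S where "S = {0..T} \<inter> (\<lambda>t. norm (X t \<omega> - x i)) -` {?R..}"
      have tS: "t \<in> S" using t nt unfolding S_def by auto
      have cn: "continuous_on {0..T} (\<lambda>t. norm (X t \<omega> - x i))"
        by (intro continuous_intros continuous_on_subset[OF cX]) auto
      have cl: "closed S" unfolding S_def by (rule continuous_closed_preimage[OF cn]) auto
      have bb: "bdd_below S" unfolding S_def by (rule bdd_belowI[of _ 0]) auto
      have ne: "S \<noteq> {}" using tS by blast
      define ts where "ts = Inf S"
      have tsS: "ts \<in> S" unfolding ts_def by (rule closed_contains_Inf[OF ne bb cl])
      then have ts0: "ts \<in> {0..T}" and tsR: "norm (X ts \<omega> - x i) \<ge> ?R" unfolding S_def by auto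
      have "X ts \<omega> - x i = sqrt 2 *\<^sub>R ou_integral \<alpha>0 B ts \<omega>"
      proof (rule path[OF w])
        show "0 \<le> ts" using ts0 by auto
        show "\<forall>s\<in>{0..ts}. s \<noteq> ts \<longrightarrow> norm (X s \<omega> - x i) \<le> ?R"
        proof (intro ballI impI)
          fix s assume s: "s \<in> {0..ts}" "s \<noteq> ts"
          show "norm (X s \<omega> - x i) \<le> ?R"
          proof (rule ccontr)
            assume "\<not> norm (X s \<omega> - x i) \<le> ?R"
            then have "s \<in> S" unfolding S_def using s ts0 by auto
            then have "ts \<le> s" unfolding ts_def by (rule cInf_lower[OF _ bb])
            then show False using s by auto
          qed
        qed
      qed
      then have "norm (X ts \<omega> - x i) < ?R" using G ts0 by simp
      then show False using tsR by simp
    qed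
    have T0: "T \<in> {0..}" using T_pos by auto
    have e: "?R - norm (X T \<omega> - x i) > 0" using all[of T] T_pos by auto
    obtain d where d: "d > 0" "\<And>y. y \<in> {0..} \<Longrightarrow> dist y T < d \<Longrightarrow> dist (X y \<omega>) (X T \<omega>) < ?R - norm (X T \<omega> - x i)"
      using cX T0 e unfolding continuous_on_iff by blast
    have "ereal (T + d) \<le> exit_time X (x i) \<omega>" unfolding exit_time_def
    proof (rule Inf_greatest)
      fix z assume "z \<in> {ereal t | t. 0 \<le> t \<and> norm (X t \<omega> - x i) \<ge> ?R}"
      then obtain t where z: "z = ereal t" "0 \<le> t" "norm (X t \<omega> - x i) \<ge> ?R" by blast
      have "T + d \<le> t"
      proof (rule ccontr)
        assume "\<not> T + d \<le> t"
        show False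
        proof (cases "t \<le> T")
          case True then show False using all[of t] z by auto
        next
          case False
          then have "dist t T < d" using \<open>\<not> T + d \<le> t\<close> by (auto simp: dist_real_def)
          then have "dist (X t \<omega>) (X T \<omega>) < ?R - norm (X T \<omega> - x i)" using d z by auto
          moreover have "norm (X t \<omega> - x i) \<le> norm (X T \<omega> - x i) + dist (X t \<omega>) (X T \<omega>)"
            using norm_triangle_ineq[of "X t \<omega> - X T \<omega>" "X T \<omega> - x i"] by (simp add: dist_norm)
          ultimately show False using z by linarith
        qed
      qed
      then show "ereal (T + d) \<le> z" using z by simp
    qed
    moreover have "ereal T < ereal (T + d)" using d by simp
    ultimately show "exit_time X (x i) \<omega> > ereal T" by (rule order.strict_trans2[rotated])
  qed
  interpret P: prob_space M by (rule BMu(1))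
  have oum: "(\<lambda>\<omega>. ou_integral \<alpha>0 B q \<omega>) \<in> borel_measurable M" if "q \<in> {0..T}" for q
    using that by (intro ou_meas[OF BMu(2) Bc]) auto
  have ouc: "continuous_on {0..T} (\<lambda>t. ou_integral \<alpha>0 B t \<omega>)" if "\<omega> \<in> space M" for \<omega>
    by (rule ou_cont[where B=B and \<omega>=\<omega>, OF Bc[OF that]])
  define G where "G = {\<omega> \<in> space M. \<forall>t\<in>{0..T}. norm (sqrt 2 *\<^sub>R ou_integral \<alpha>0 B t \<omega>) < ?R}"
  define E where "E = {\<omega> \<in> space M. \<exists>t\<in>{0..T}. norm (ou_integral \<alpha>0 B t \<omega>) > 0.1 * ?sd}"
  have Gs: "G \<in> sets M" unfolding G_def
  proof (rule sets_forall[where g="\<lambda>t \<omega>. norm (sqrt 2 *\<^sub>R ou_integral \<alpha>0 B t \<omega>)"])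
    fix q assume q: "q \<in> {0..T}"
    show "(\<lambda>\<omega>. norm (sqrt 2 *\<^sub>R ou_integral \<alpha>0 B q \<omega>)) \<in> borel_measurable M"
      using oum[OF q] by measurable
  next
    fix \<omega> assume "\<omega> \<in> space M"
    then show "continuous_on {0..T} (\<lambda>t. norm (sqrt 2 *\<^sub>R ou_integral \<alpha>0 B t \<omega>))"
      using ouc by (intro continuous_intros) auto
  qed (use T_pos in auto)
  have Es: "E \<in> sets M" unfolding E_def
  proof (rule sets_exists[where g="\<lambda>t \<omega>. norm (ou_integral \<alpha>0 B t \<omega>)"])
    fix q assume q: "q \<in> {0..T}"
    show "(\<lambda>\<omega>. norm (ou_integral \<alpha>0 B q \<omega>)) \<in> borel_measurable M"
      using oum[OF q] by measurable
  next
    fix \<omega> assume "\<omega> \<in> space M"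
    then show "continuous_on {0..T} (\<lambda>t. norm (ou_integral \<alpha>0 B t \<omega>))"
      using ouc by (intro continuous_intros) auto
  qed (use T_pos in auto)
  have mE: "measure M E \<le> 3 * \<alpha>0 * exp (- c * real CARD('n))"
    using OU_bound BM d_large T_pos T_le unfolding E_def by blast
  have s2: "sqrt 2 < (3/2::real)" by (rule real_less_lsqrt) (auto simp: power2_eq_square)
  have sub: "space M - E \<subseteq> G"
  proof
    fix \<omega> assume a: "\<omega> \<in> space M - E"
    have "norm (sqrt 2 *\<^sub>R ou_integral \<alpha>0 B t \<omega>) < ?R" if t: "t \<in> {0..T}" for t
    proof -
      have "\<not> (0.1 * ?sd < norm (ou_integral \<alpha>0 B t \<omega>))" using a t unfolding E_def by blast
      then have le: "norm (ou_integral \<alpha>0 B t \<omega>) \<le> 0.1 * ?sd" by (rule leI)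
      have "norm (sqrt 2 *\<^sub>R ou_integral \<alpha>0 B t \<omega>) = sqrt 2 * norm (ou_integral \<alpha>0 B t \<omega>)" by simp
      also have "\<dots> \<le> sqrt 2 * (0.1 * ?sd)" using le by (intro mult_left_mono) auto
      also have "\<dots> < 3/2 * (0.1 * ?sd)" using s2 sd1 by (intro mult_strict_right_mono) auto
      finally show ?thesis by simp
    qed
    then show "\<omega> \<in> G" using a unfolding G_def by auto
  qed
  have c1: "measure M (space M - E) = 1 - measure M E" using Es by (rule P.prob_compl)
  have c2: "measure M (space M - E) \<le> measure M G" using sub Gs by (rule P.finite_measure_mono)
  from c1 c2 have "measure M G \<ge> 1 - 3 * \<alpha>0 * exp (- c * real CARD('n))" using mE by linarith
  moreover have "{\<omega> \<in> space M. exit_time X (x i) \<omega> > ereal T} = G" unfolding G_def using iff by blast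
  ultimately show ?thesis by simp
qed



end
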